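(* If a Markov category $\mathcal C$ is causal, then $\mathcal C$ is relatively positive.
   Context: A Markov category is a symmetric monoidal category $(\mathcal C,\otimes,I)$ with commutative comonoids $\mathrm{copy}_X\colon X\to X\otimes X$, $\mathrm{del}_X\colon X\to I$ compatible with $\otimes$, with $I$ terminal. For $m\colon\Theta\to A$ and $f,g\colon A\to Z$, $f$ and $g$ are $m$-almost surely equal if $(\mathrm{id}_A\otimes f)\circ\mathrm{copy}_A\circ m=(\mathrm{id}_A\otimes g)\circ\mathrm{copy}_A\circ m$. $\mathcal C$ is relatively positive if for all $p\colon\Theta\to X$, $f\colon X\to Y$, $g\colon Y\to Z$ such that $\mathrm{copy}_Z\circ g\circ f$ and $((g\circ f)\otimes(g\circ f))\circ\mathrm{copy}_X$ are $p$-almost surely equal, the morphisms $(\mathrm{id}_Y\otimes g)\circ\mathrm{copy}_Y\circ f$ and $(f\otimes(g\circ f))\circ\mathrm{copy}_X$ are $p$-almost surely equal. $\mathcal C$ is causal if for all $f\colon A\to W$, $g\colon W\to X$, $h_1,h_2\colon X\to Y$ with $(\mathrm{id}_X\otimes h_1)\circ\mathrm{copy}_X\circ g\circ f=(\mathrm{id}_X\otimes h_2)\circ\mathrm{copy}_X\circ g\circ f$, also $\big(\mathrm{id}_W\otimes((\mathrm{id}_X\otimes h_1)\circ\mathrm{copy}_X\circ g)\big)\circ\mathrm{copy}_W\circ f=\big(\mathrm{id}_W\otimes((\mathrm{id}_X\otimes h_2)\circ\mathrm{copy}_X\circ g)\big)\circ\mathrm{copy}_W\circ f$. *)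

theory Defs
  imports Main
begin

text \<open>A (not necessarily strict) symmetric monoidal category presented by its
structure maps. Objects have type 'o, morphisms type 'm; composition
comp C g f means g after f and is only constrained when cod f = dom g.\<close>

record ('o, 'm) mcat =
  mdom :: "'m \<Rightarrow> 'o"
  mcod :: "'m \<Rightarrow> 'o"
  comp :: "'m \<Rightarrow> 'm \<Rightarrow> 'm"
  mid :: "'o \<Rightarrow> 'm"
  otens :: "'o \<Rightarrow> 'o \<Rightarrow> 'o"
  mtens :: "'m \<Rightarrow> 'm \<Rightarrow> 'm"
  unit_ob :: "'o"
  assoc :: "'o \<Rightarrow> 'o \<Rightarrow> 'o \<Rightarrow> 'm"
  assoc_inv :: "'o \<Rightarrow> 'o \<Rightarrow> 'o \<Rightarrow> 'm"
  lunit :: "'o \<Rightarrow> 'm"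
  lunit_inv :: "'o \<Rightarrow> 'm"
  runit :: "'o \<Rightarrow> 'm"
  runit_inv :: "'o \<Rightarrow> 'm"
  swap :: "'o \<Rightarrow> 'o \<Rightarrow> 'm"
  copy :: "'o \<Rightarrow> 'm"
  del :: "'o \<Rightarrow> 'm"

definition hom :: "('o, 'm) mcat \<Rightarrow> 'm \<Rightarrow> 'o \<Rightarrow> 'o \<Rightarrow> bool" where
  "hom C f a b \<longleftrightarrow> mdom C f = a \<and> mcod C f = b"

text \<open>Middle-four interchange (a\<otimes>a)\<otimes>(b\<otimes>b) \<rightarrow> (a\<otimes>b)\<otimes>(a\<otimes>b).\<close>
definition middle4 :: "('o, 'm) mcat \<Rightarrow> 'o \<Rightarrow> 'o \<Rightarrow> 'm" where
  "middle4 C a b =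
     comp C (assoc_inv C a b (otens C a b))
      (comp C (mtens C (mid C a)
                 (comp C (assoc C b a b)
                    (comp C (mtens C (swap C a b) (mid C b)) (assoc_inv C a b b))))
         (assoc C a a (otens C b b)))"

locale markov_category =
  fixes C :: "('o, 'm) mcat" (structure)
  assumes id_hom: "hom C (mid C a) a a"
    and comp_hom: "hom C f a b \<Longrightarrow> hom C g b c \<Longrightarrow> hom C (comp C g f) a c"
    and id_left: "hom C f a b \<Longrightarrow> comp C (mid C b) f = f"
    and id_right: "hom C f a b \<Longrightarrow> comp C f (mid C a) = f"
    and comp_assoc: "hom C f a b \<Longrightarrow> hom C g b c \<Longrightarrow> hom C h c d \<Longrightarrow>
        comp C h (comp C g f) = comp C (comp C h g) f"
    and tens_hom: "hom C f a b \<Longrightarrow> hom C g c d \<Longrightarrow>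
        hom C (mtens C f g) (otens C a c) (otens C b d)"
    and tens_id: "mtens C (mid C a) (mid C b) = mid C (otens C a b)"
    and interchange: "hom C f a b \<Longrightarrow> hom C g b c \<Longrightarrow> hom C f' a' b' \<Longrightarrow> hom C g' b' c' \<Longrightarrow>
        mtens C (comp C g f) (comp C g' f') = comp C (mtens C g g') (mtens C f f')"
    and assoc_hom: "hom C (assoc C a b c) (otens C (otens C a b) c) (otens C a (otens C b c))"
    and assoc_inv_hom: "hom C (assoc_inv C a b c) (otens C a (otens C b c)) (otens C (otens C a b) c)"
    and assoc_inv1: "comp C (assoc_inv C a b c) (assoc C a b c) = mid C (otens C (otens C a b) c)"
    and assoc_inv2: "comp C (assoc C a b c) (assoc_inv C a b c) = mid C (otens C a (otens C b c))"
    and assoc_nat: "hom C f a a' \<Longrightarrow> hom C g b b' \<Longrightarrow> hom C h c c' \<Longrightarrow>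
        comp C (assoc C a' b' c') (mtens C (mtens C f g) h)
          = comp C (mtens C f (mtens C g h)) (assoc C a b c)"
    and lunit_hom: "hom C (lunit C a) (otens C (unit_ob C) a) a"
    and lunit_inv_hom: "hom C (lunit_inv C a) a (otens C (unit_ob C) a)"
    and lunit_inv1: "comp C (lunit_inv C a) (lunit C a) = mid C (otens C (unit_ob C) a)"
    and lunit_inv2: "comp C (lunit C a) (lunit_inv C a) = mid C a"
    and lunit_nat: "hom C f a b \<Longrightarrow>
        comp C (lunit C b) (mtens C (mid C (unit_ob C)) f) = comp C f (lunit C a)"
    and runit_hom: "hom C (runit C a) (otens C a (unit_ob C)) a"
    and runit_inv_hom: "hom C (runit_inv C a) a (otens C a (unit_ob C))"
    and runit_inv1: "comp C (runit_inv C a) (runit C a) = mid C (otens C a (unit_ob C))"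
    and runit_inv2: "comp C (runit C a) (runit_inv C a) = mid C a"
    and runit_nat: "hom C f a b \<Longrightarrow>
        comp C (runit C b) (mtens C f (mid C (unit_ob C))) = comp C f (runit C a)"
    and pentagon: "comp C (assoc C a b (otens C c d)) (assoc C (otens C a b) c d)
        = comp C (mtens C (mid C a) (assoc C b c d))
            (comp C (assoc C a (otens C b c) d) (mtens C (assoc C a b c) (mid C d)))"
    and triangle: "comp C (mtens C (mid C a) (lunit C b)) (assoc C a (unit_ob C) b)
        = mtens C (runit C a) (mid C b)"
    and swap_hom: "hom C (swap C a b) (otens C a b) (otens C b a)"
    and swap_nat: "hom C f a a' \<Longrightarrow> hom C g b b' \<Longrightarrow>
        comp C (swap C a' b') (mtens C f g) = comp C (mtens C g f) (swap C a b)"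
    and swap_sym: "comp C (swap C b a) (swap C a b) = mid C (otens C a b)"
    and hexagon: "comp C (assoc C b c a) (comp C (swap C a (otens C b c)) (assoc C a b c))
        = comp C (mtens C (mid C b) (swap C a c))
            (comp C (assoc C b a c) (mtens C (swap C a b) (mid C c)))"
    and copy_hom: "hom C (copy C a) a (otens C a a)"
    and del_hom: "hom C (del C a) a (unit_ob C)"
    and counit_left: "comp C (lunit C a) (comp C (mtens C (del C a) (mid C a)) (copy C a)) = mid C a"
    and counit_right: "comp C (runit C a) (comp C (mtens C (mid C a) (del C a)) (copy C a)) = mid C a"
    and coassoc: "comp C (assoc C a a a) (comp C (mtens C (copy C a) (mid C a)) (copy C a))
        = comp C (mtens C (mid C a) (copy C a)) (copy C a)"
    and cocomm: "comp C (swap C a a) (copy C a) = copy C a"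
    and copy_tens: "copy C (otens C a b) = comp C (middle4 C a b) (mtens C (copy C a) (copy C b))"
    and del_tens: "del C (otens C a b) = comp C (lunit C (unit_ob C)) (mtens C (del C a) (del C b))"
    and copy_unit: "copy C (unit_ob C) = lunit_inv C (unit_ob C)"
    and del_unit: "del C (unit_ob C) = mid C (unit_ob C)"
    and terminal: "hom C f a (unit_ob C) \<Longrightarrow> f = del C a"

definition as_eq :: "('o, 'm) mcat \<Rightarrow> 'm \<Rightarrow> 'm \<Rightarrow> 'm \<Rightarrow> bool" where
  "as_eq C m f g \<longleftrightarrow>
     comp C (mtens C (mid C (mcod C m)) f) (comp C (copy C (mcod C m)) m)
       = comp C (mtens C (mid C (mcod C m)) g) (comp C (copy C (mcod C m)) m)"

definition relatively_positive :: "('o, 'm) mcat \<Rightarrow> bool" where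
  "relatively_positive C \<longleftrightarrow>
     (\<forall>p f g T X Y Z. hom C p T X \<longrightarrow> hom C f X Y \<longrightarrow> hom C g Y Z \<longrightarrow>
        as_eq C p (comp C (copy C Z) (comp C g f))
                  (comp C (mtens C (comp C g f) (comp C g f)) (copy C X)) \<longrightarrow>
        as_eq C p (comp C (mtens C (mid C Y) g) (comp C (copy C Y) f))
                  (comp C (mtens C f (comp C g f)) (copy C X)))"

definition causal :: "('o, 'm) mcat \<Rightarrow> bool" where
  "causal C \<longleftrightarrow>
     (\<forall>f g h1 h2 A W X Y. hom C f A W \<longrightarrow> hom C g W X \<longrightarrow> hom C h1 X Y \<longrightarrow> hom C h2 X Y \<longrightarrow>
        comp C (mtens C (mid C X) h1) (comp C (copy C X) (comp C g f))
          = comp C (mtens C (mid C X) h2) (comp C (copy C X) (comp C g f)) \<longrightarrow>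
        comp C (mtens C (mid C W) (comp C (mtens C (mid C X) h1) (comp C (copy C X) g))) (comp C (copy C W) f)
          = comp C (mtens C (mid C W) (comp C (mtens C (mid C X) h2) (comp C (copy C X) g))) (comp C (copy C W) f))"

end

theory Submission
  imports Defs
begin

context markov_category begin

abbreviation cp (infixr "\<cdot>" 55) where "g \<cdot> f \<equiv> comp C g f"
abbreviation tn (infix "\<otimes>" 60) where "f \<otimes> g \<equiv> mtens C f g"
abbreviation ot (infix "\<odot>" 60) where "a \<odot> b \<equiv> otens C a b"
abbreviation "\<I> \<equiv> unit_ob C"
abbreviation "\<iota> \<equiv> mid C"
abbreviation "\<alpha> \<equiv> assoc C"
abbreviation "\<alpha>' \<equiv> assoc_inv C"
abbreviation "lm \<equiv> lunit C"
abbreviation "lm' \<equiv> lunit_inv C"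
abbreviation "\<rho> \<equiv> runit C"
abbreviation "\<rho>' \<equiv> runit_inv C"
abbreviation "\<sigma> \<equiv> swap C"
abbreviation "\<Delta> \<equiv> copy C"
abbreviation "\<epsilon> \<equiv> del C"

lemma dc[simp]:
  "mdom C (\<iota> a) = a" "mcod C (\<iota> a) = a"
  "mdom C (\<alpha> a b c) = (a \<odot> b) \<odot> c" "mcod C (\<alpha> a b c) = a \<odot> (b \<odot> c)"
  "mdom C (\<alpha>' a b c) = a \<odot> (b \<odot> c)" "mcod C (\<alpha>' a b c) = (a \<odot> b) \<odot> c"
  "mdom C (lm a) = \<I> \<odot> a" "mcod C (lm a) = a"
  "mdom C (lm' a) = a" "mcod C (lm' a) = \<I> \<odot> a"
  "mdom C (\<rho> a) = a \<odot> \<I>" "mcod C (\<rho> a) = a"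
  "mdom C (\<rho>' a) = a" "mcod C (\<rho>' a) = a \<odot> \<I>"
  "mdom C (\<sigma> a b) = a \<odot> b" "mcod C (\<sigma> a b) = b \<odot> a"
  "mdom C (\<Delta> a) = a" "mcod C (\<Delta> a) = a \<odot> a"
  "mdom C (\<epsilon> a) = a" "mcod C (\<epsilon> a) = \<I>"
  "mdom C (f \<otimes> g) = mdom C f \<odot> mdom C g" "mcod C (f \<otimes> g) = mcod C f \<odot> mcod C g"
  using id_hom assoc_hom assoc_inv_hom lunit_hom lunit_inv_hom runit_hom runit_inv_hom swap_hom
    copy_hom del_hom tens_hom[of f "mdom C f" "mcod C f" g "mdom C g" "mcod C g"]
  by (auto simp: hom_def)

lemma dc_comp[simp]:
  "mcod C f = mdom C g \<Longrightarrow> mdom C (g \<cdot> f) = mdom C f"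
  "mcod C f = mdom C g \<Longrightarrow> mcod C (g \<cdot> f) = mcod C g"
  using comp_hom[of f "mdom C f" "mcod C f" g "mcod C g"] by (auto simp: hom_def)

lemma ca[simp]: "mcod C f = mdom C g \<Longrightarrow> mcod C g = mdom C h \<Longrightarrow> (h \<cdot> g) \<cdot> f = h \<cdot> (g \<cdot> f)"
  using comp_assoc[of f "mdom C f" "mdom C g" g "mdom C h" h "mcod C h"] by (simp add: hom_def)

lemma il[simp]: "mcod C f = b \<Longrightarrow> \<iota> b \<cdot> f = f"
  using id_left[of f "mdom C f" b] by (simp add: hom_def)
lemma ir[simp]: "mdom C f = a \<Longrightarrow> f \<cdot> \<iota> a = f"
  using id_right[of f a "mcod C f"] by (simp add: hom_def)

lemma ich: "mcod C f = mdom C g \<Longrightarrow> mcod C f' = mdom C g' \<Longrightarrow>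
   (g \<otimes> g') \<cdot> (f \<otimes> f') = (g \<cdot> f) \<otimes> (g' \<cdot> f')"
  using interchange[of f "mdom C f" "mdom C g" g "mcod C g" f' "mdom C f'" "mdom C g'" g' "mcod C g'"]
  by (simp add: hom_def)

lemma rest: "g \<cdot> f = h \<Longrightarrow> mcod C f = mdom C g \<Longrightarrow> mcod C r = mdom C f \<Longrightarrow> g \<cdot> (f \<cdot> r) = h \<cdot> r"
  by (metis ca)

lemmas ichr = rest[OF ich]

lemma anat: "\<alpha> (mcod C f) (mcod C g) (mcod C h) \<cdot> ((f \<otimes> g) \<otimes> h) = (f \<otimes> (g \<otimes> h)) \<cdot> \<alpha> (mdom C f) (mdom C g) (mdom C h)"
  using assoc_nat[of f "mdom C f" "mcod C f" g "mdom C g" "mcod C g" h "mdom C h" "mcod C h"] by (simp add: hom_def)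

lemma ainv1[simp]: "\<alpha>' a b c \<cdot> \<alpha> a b c = \<iota> ((a \<odot> b) \<odot> c)" using assoc_inv1 .
lemma ainv2[simp]: "\<alpha> a b c \<cdot> \<alpha>' a b c = \<iota> (a \<odot> (b \<odot> c))" using assoc_inv2 .
lemma ainv1r[simp]: "mcod C r = (a \<odot> b) \<odot> c \<Longrightarrow> \<alpha>' a b c \<cdot> (\<alpha> a b c \<cdot> r) = r"
  by (subst ca[symmetric]) auto
lemma ainv2r[simp]: "mcod C r = a \<odot> (b \<odot> c) \<Longrightarrow> \<alpha> a b c \<cdot> (\<alpha>' a b c \<cdot> r) = r"
  by (subst ca[symmetric]) auto
lemma linv1[simp]: "lm' a \<cdot> lm a = \<iota> (\<I> \<odot> a)" using lunit_inv1 .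
lemma linv2[simp]: "lm a \<cdot> lm' a = \<iota> a" using lunit_inv2 .
lemma linv1r[simp]: "mcod C r = \<I> \<odot> a \<Longrightarrow> lm' a \<cdot> (lm a \<cdot> r) = r"
  by (subst ca[symmetric]) auto
lemma linv2r[simp]: "mcod C r = a \<Longrightarrow> lm a \<cdot> (lm' a \<cdot> r) = r"
  by (subst ca[symmetric]) auto
lemma rinv1[simp]: "\<rho>' a \<cdot> \<rho> a = \<iota> (a \<odot> \<I>)" using runit_inv1 .
lemma rinv2[simp]: "\<rho> a \<cdot> \<rho>' a = \<iota> a" using runit_inv2 .
lemma rinv1r[simp]: "mcod C r = a \<odot> \<I> \<Longrightarrow> \<rho>' a \<cdot> (\<rho> a \<cdot> r) = r"
  by (subst ca[symmetric]) auto
lemma rinv2r[simp]: "mcod C r = a \<Longrightarrow> \<rho> a \<cdot> (\<rho>' a \<cdot> r) = r"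
  by (subst ca[symmetric]) auto

lemma anat': "\<alpha>' (mcod C f) (mcod C g) (mcod C h) \<cdot> (f \<otimes> (g \<otimes> h)) = ((f \<otimes> g) \<otimes> h) \<cdot> \<alpha>' (mdom C f) (mdom C g) (mdom C h)"
proof -
  have "\<alpha>' (mcod C f) (mcod C g) (mcod C h) \<cdot> (f \<otimes> (g \<otimes> h))
     = \<alpha>' (mcod C f) (mcod C g) (mcod C h) \<cdot> ((f \<otimes> (g \<otimes> h)) \<cdot> (\<alpha> (mdom C f) (mdom C g) (mdom C h) \<cdot> \<alpha>' (mdom C f) (mdom C g) (mdom C h)))"
    by simp
  also have "\<dots> = \<alpha>' (mcod C f) (mcod C g) (mcod C h) \<cdot> (\<alpha> (mcod C f) (mcod C g) (mcod C h) \<cdot> ((f \<otimes> g) \<otimes> h) \<cdot> \<alpha>' (mdom C f) (mdom C g) (mdom C h))"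
    by (simp only: rest[OF anat[symmetric]] dc dc_comp ca)
  also have "\<dots> = ((f \<otimes> g) \<otimes> h) \<cdot> \<alpha>' (mdom C f) (mdom C g) (mdom C h)"
    by simp
  finally show ?thesis .
qed

lemma lnat: "lm (mcod C f) \<cdot> (\<iota> \<I> \<otimes> f) = f \<cdot> lm (mdom C f)"
  using lunit_nat[of f "mdom C f" "mcod C f"] by (simp add: hom_def)
lemma rnat: "\<rho> (mcod C f) \<cdot> (f \<otimes> \<iota> \<I>) = f \<cdot> \<rho> (mdom C f)"
  using runit_nat[of f "mdom C f" "mcod C f"] by (simp add: hom_def)
lemma snat: "\<sigma> (mcod C f) (mcod C g) \<cdot> (f \<otimes> g) = (g \<otimes> f) \<cdot> \<sigma> (mdom C f) (mdom C g)"
  using swap_nat[of f "mdom C f" "mcod C f" g "mdom C g" "mcod C g"] by (simp add: hom_def)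
lemma termi: "mcod C f = \<I> \<Longrightarrow> f = \<epsilon> (mdom C f)"
  using terminal[of f "mdom C f"] by (simp add: hom_def)
lemma delc[simp]: "mcod C f = a \<Longrightarrow> \<epsilon> a \<cdot> f = \<epsilon> (mdom C f)"
proof -
  assume a: "mcod C f = a"
  have "\<epsilon> a \<cdot> f = \<epsilon> (mdom C (\<epsilon> a \<cdot> f))" by (rule termi) (simp add: a)
  then show ?thesis using a by simp
qed

lemma tid[simp]: "\<iota> a \<otimes> \<iota> b = \<iota> (a \<odot> b)" using tens_id .

lemma del_copy: "(\<epsilon> a \<otimes> \<iota> a) \<cdot> \<Delta> a = lm' a"
proof -
  have "(\<epsilon> a \<otimes> \<iota> a) \<cdot> \<Delta> a = lm' a \<cdot> (lm a \<cdot> ((\<epsilon> a \<otimes> \<iota> a) \<cdot> \<Delta> a))" by simp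
  also have "\<dots> = lm' a" using counit_left[of a] by simp
  finally show ?thesis .
qed
lemma copy_del: "(\<iota> a \<otimes> \<epsilon> a) \<cdot> \<Delta> a = \<rho>' a"
proof -
  have "(\<iota> a \<otimes> \<epsilon> a) \<cdot> \<Delta> a = \<rho>' a \<cdot> (\<rho> a \<cdot> ((\<iota> a \<otimes> \<epsilon> a) \<cdot> \<Delta> a))" by simp
  also have "\<dots> = \<rho>' a" using counit_right[of a] by simp
  finally show ?thesis .
qed

lemmas S = dc dc_comp ca

lemma anatL: "mcod C f = a \<Longrightarrow> mcod C g = b \<Longrightarrow> mcod C h = c \<Longrightarrow>
  \<alpha> a b c \<cdot> ((f \<otimes> g) \<otimes> h) = (f \<otimes> (g \<otimes> h)) \<cdot> \<alpha> (mdom C f) (mdom C g) (mdom C h)"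
  using anat by blast
lemma anatR: "mdom C f = a \<Longrightarrow> mdom C g = b \<Longrightarrow> mdom C h = c \<Longrightarrow>
  (f \<otimes> (g \<otimes> h)) \<cdot> \<alpha> a b c = \<alpha> (mcod C f) (mcod C g) (mcod C h) \<cdot> ((f \<otimes> g) \<otimes> h)"
  using anat by metis
lemma anat'L: "mcod C f = a \<Longrightarrow> mcod C g = b \<Longrightarrow> mcod C h = c \<Longrightarrow>
  \<alpha>' a b c \<cdot> (f \<otimes> (g \<otimes> h)) = ((f \<otimes> g) \<otimes> h) \<cdot> \<alpha>' (mdom C f) (mdom C g) (mdom C h)"
  using anat' by blast
lemma anat'R: "mdom C f = a \<Longrightarrow> mdom C g = b \<Longrightarrow> mdom C h = c \<Longrightarrow>
  ((f \<otimes> g) \<otimes> h) \<cdot> \<alpha>' a b c = \<alpha>' (mcod C f) (mcod C g) (mcod C h) \<cdot> (f \<otimes> (g \<otimes> h))"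
  using anat' by metis
lemma snatL: "mcod C f = a \<Longrightarrow> mcod C g = b \<Longrightarrow>
  \<sigma> a b \<cdot> (f \<otimes> g) = (g \<otimes> f) \<cdot> \<sigma> (mdom C f) (mdom C g)"
  using snat by blast
lemma snatR: "mdom C f = a \<Longrightarrow> mdom C g = b \<Longrightarrow>
  (g \<otimes> f) \<cdot> \<sigma> a b = \<sigma> (mcod C f) (mcod C g) \<cdot> (f \<otimes> g)"
  using snat by metis
lemma lnatL: "mcod C f = a \<Longrightarrow> lm a \<cdot> (\<iota> \<I> \<otimes> f) = f \<cdot> lm (mdom C f)"
  using lnat by blast
lemma lnatR: "mdom C f = a \<Longrightarrow> f \<cdot> lm a = lm (mcod C f) \<cdot> (\<iota> \<I> \<otimes> f)"
  using lnat by metis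
lemma rnatL: "mcod C f = a \<Longrightarrow> \<rho> a \<cdot> (f \<otimes> \<iota> \<I>) = f \<cdot> \<rho> (mdom C f)"
  using rnat by blast
lemma rnatR: "mdom C f = a \<Longrightarrow> f \<cdot> \<rho> a = \<rho> (mcod C f) \<cdot> (f \<otimes> \<iota> \<I>)"
  using rnat by metis

lemma restc: "g \<cdot> f = h \<Longrightarrow> mcod C f = mdom C g \<Longrightarrow> mcod C r = mdom C f \<Longrightarrow> g \<cdot> (f \<cdot> r) = h \<cdot> r"
  by (metis ca)

lemma anatLr: "mcod C f = a \<Longrightarrow> mcod C g = b \<Longrightarrow> mcod C h = c \<Longrightarrow> mcod C r = (mdom C f \<odot> mdom C g) \<odot> mdom C h \<Longrightarrow>
  \<alpha> a b c \<cdot> (((f \<otimes> g) \<otimes> h) \<cdot> r) = (f \<otimes> (g \<otimes> h)) \<cdot> (\<alpha> (mdom C f) (mdom C g) (mdom C h) \<cdot> r)"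
  by (subst restc[OF anatL]) (simp_all)
lemma anatRr: "mdom C f = a \<Longrightarrow> mdom C g = b \<Longrightarrow> mdom C h = c \<Longrightarrow> mcod C r = (a \<odot> b) \<odot> c \<Longrightarrow>
  (f \<otimes> (g \<otimes> h)) \<cdot> (\<alpha> a b c \<cdot> r) = \<alpha> (mcod C f) (mcod C g) (mcod C h) \<cdot> (((f \<otimes> g) \<otimes> h) \<cdot> r)"
  by (subst restc[OF anatR]) (simp_all)
lemma anat'Lr: "mcod C f = a \<Longrightarrow> mcod C g = b \<Longrightarrow> mcod C h = c \<Longrightarrow> mcod C r = mdom C f \<odot> (mdom C g \<odot> mdom C h) \<Longrightarrow>
  \<alpha>' a b c \<cdot> ((f \<otimes> (g \<otimes> h)) \<cdot> r) = ((f \<otimes> g) \<otimes> h) \<cdot> (\<alpha>' (mdom C f) (mdom C g) (mdom C h) \<cdot> r)"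
  by (subst restc[OF anat'L]) (simp_all)
lemma anat'Rr: "mdom C f = a \<Longrightarrow> mdom C g = b \<Longrightarrow> mdom C h = c \<Longrightarrow> mcod C r = a \<odot> (b \<odot> c) \<Longrightarrow>
  ((f \<otimes> g) \<otimes> h) \<cdot> (\<alpha>' a b c \<cdot> r) = \<alpha>' (mcod C f) (mcod C g) (mcod C h) \<cdot> ((f \<otimes> (g \<otimes> h)) \<cdot> r)"
  by (subst restc[OF anat'R]) (simp_all)
lemma snatLr: "mcod C f = a \<Longrightarrow> mcod C g = b \<Longrightarrow> mcod C r = mdom C f \<odot> mdom C g \<Longrightarrow>
  \<sigma> a b \<cdot> ((f \<otimes> g) \<cdot> r) = (g \<otimes> f) \<cdot> (\<sigma> (mdom C f) (mdom C g) \<cdot> r)"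
  by (subst restc[OF snatL]) (simp_all)
lemma snatRr: "mdom C f = a \<Longrightarrow> mdom C g = b \<Longrightarrow> mcod C r = a \<odot> b \<Longrightarrow>
  (g \<otimes> f) \<cdot> (\<sigma> a b \<cdot> r) = \<sigma> (mcod C f) (mcod C g) \<cdot> ((f \<otimes> g) \<cdot> r)"
  by (subst restc[OF snatR]) (simp_all)
lemma lnatLr: "mcod C f = a \<Longrightarrow> mcod C r = \<I> \<odot> mdom C f \<Longrightarrow> lm a \<cdot> ((\<iota> \<I> \<otimes> f) \<cdot> r) = f \<cdot> (lm (mdom C f) \<cdot> r)"
  by (subst restc[OF lnatL]) (simp_all)
lemma lnatRr: "mdom C f = a \<Longrightarrow> mcod C r = \<I> \<odot> a \<Longrightarrow> f \<cdot> (lm a \<cdot> r) = lm (mcod C f) \<cdot> ((\<iota> \<I> \<otimes> f) \<cdot> r)"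
  by (subst restc[OF lnatR]) (simp_all)
lemma rnatLr: "mcod C f = a \<Longrightarrow> mcod C r = mdom C f \<odot> \<I> \<Longrightarrow> \<rho> a \<cdot> ((f \<otimes> \<iota> \<I>) \<cdot> r) = f \<cdot> (\<rho> (mdom C f) \<cdot> r)"
  by (subst restc[OF rnatL]) (simp_all)
lemma rnatRr: "mdom C f = a \<Longrightarrow> mcod C r = a \<odot> \<I> \<Longrightarrow> f \<cdot> (\<rho> a \<cdot> r) = \<rho> (mcod C f) \<cdot> ((f \<otimes> \<iota> \<I>) \<cdot> r)"
  by (subst restc[OF rnatR]) (simp_all)

lemma ichr2: "mcod C f = mdom C g \<Longrightarrow> mcod C f' = mdom C g' \<Longrightarrow> mcod C r = mdom C f \<odot> mdom C f' \<Longrightarrow>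
   (g \<otimes> g') \<cdot> ((f \<otimes> f') \<cdot> r) = ((g \<cdot> f) \<otimes> (g' \<cdot> f')) \<cdot> r"
  by (subst restc[OF ich]) simp_all

lemma rho_swap: "\<rho> b \<cdot> \<sigma> \<I> b = lm b"
proof -
  have "\<rho> b \<cdot> \<sigma> \<I> b = \<rho> b \<cdot> (\<sigma> \<I> b \<cdot> (lm' b \<cdot> lm b))" by simp
  also have "\<dots> = \<rho> b \<cdot> (\<sigma> \<I> b \<cdot> ((\<epsilon> b \<otimes> \<iota> b) \<cdot> (\<Delta> b \<cdot> lm b)))"
    by (simp only: del_copy[symmetric] S)
  also have "\<dots> = \<rho> b \<cdot> ((\<iota> b \<otimes> \<epsilon> b) \<cdot> (\<sigma> b b \<cdot> (\<Delta> b \<cdot> lm b)))"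
    by (simp only: snatLr S)
  also have "\<dots> = \<rho> b \<cdot> ((\<iota> b \<otimes> \<epsilon> b) \<cdot> (\<Delta> b \<cdot> lm b))"
    by (simp only: cocomm[THEN restc] S)
  also have "\<dots> = lm b"
    by (simp only: copy_del[THEN restc] S) simp
  finally show ?thesis .
qed

lemma rho_cancel: "mcod C K = x \<Longrightarrow> mdom C K = y \<Longrightarrow> K = \<rho> x \<cdot> ((K \<otimes> \<iota> \<I>) \<cdot> \<rho>' y)"
  by (simp only: rnatLr S) simp

lemma kelly_right: "(\<iota> a \<otimes> \<rho> b) \<cdot> \<alpha> a b \<I> = \<rho> (a \<odot> b)"
proof -
  let ?K = "(\<iota> a \<otimes> \<rho> b) \<cdot> \<alpha> a b \<I>"
  have P: "\<alpha> a b (\<I> \<odot> \<I>) \<cdot> \<alpha> (a \<odot> b) \<I> \<I> = (\<iota> a \<otimes> \<alpha> b \<I> \<I>) \<cdot> (\<alpha> a (b \<odot> \<I>) \<I> \<cdot> (\<alpha> a b \<I> \<otimes> \<iota> \<I>))"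
    using pentagon by simp
  have L: "(\<iota> a \<otimes> (\<iota> b \<otimes> lm \<I>)) \<cdot> (\<alpha> a b (\<I> \<odot> \<I>) \<cdot> \<alpha> (a \<odot> b) \<I> \<I>) = \<alpha> a b \<I> \<cdot> (\<rho> (a \<odot> b) \<otimes> \<iota> \<I>)"
    by (simp only: anatRr tid triangle S)
  have R: "(\<iota> a \<otimes> (\<iota> b \<otimes> lm \<I>)) \<cdot> ((\<iota> a \<otimes> \<alpha> b \<I> \<I>) \<cdot> (\<alpha> a (b \<odot> \<I>) \<I> \<cdot> (\<alpha> a b \<I> \<otimes> \<iota> \<I>))) = \<alpha> a b \<I> \<cdot> (?K \<otimes> \<iota> \<I>)"
    by (simp only: ichr2 il triangle anatRr ich S)
  have "\<alpha> a b \<I> \<cdot> (\<rho> (a \<odot> b) \<otimes> \<iota> \<I>) = \<alpha> a b \<I> \<cdot> (?K \<otimes> \<iota> \<I>)"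
    using L R P by metis
  then have "\<alpha>' a b \<I> \<cdot> (\<alpha> a b \<I> \<cdot> (\<rho> (a \<odot> b) \<otimes> \<iota> \<I>)) = \<alpha>' a b \<I> \<cdot> (\<alpha> a b \<I> \<cdot> (?K \<otimes> \<iota> \<I>))"
    by (rule arg_cong)
  then have E: "\<rho> (a \<odot> b) \<otimes> \<iota> \<I> = ?K \<otimes> \<iota> \<I>"
    by (simp only: ainv1r S)
  have "?K = \<rho> (a \<odot> b) \<cdot> ((?K \<otimes> \<iota> \<I>) \<cdot> \<rho>' ((a \<odot> b) \<odot> \<I>))"
    by (rule rho_cancel) simp_all
  also have "\<dots> = \<rho> (a \<odot> b) \<cdot> ((\<rho> (a \<odot> b) \<otimes> \<iota> \<I>) \<cdot> \<rho>' ((a \<odot> b) \<odot> \<I>))" using E by simp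
  also have "\<dots> = \<rho> (a \<odot> b)" by (rule rho_cancel[symmetric]) simp_all
  finally show ?thesis .
qed

lemma lm_cancel: "mcod C K = x \<Longrightarrow> mdom C K = y \<Longrightarrow> K = lm x \<cdot> ((\<iota> \<I> \<otimes> K) \<cdot> lm' y)"
  by (simp only: lnatLr S) simp

lemma anatR_id: "mdom C f = a \<Longrightarrow> (f \<otimes> \<iota> (b \<odot> c)) \<cdot> \<alpha> a b c = \<alpha> (mcod C f) b c \<cdot> ((f \<otimes> \<iota> b) \<otimes> \<iota> c)"
  using anatR[of f a "\<iota> b" b "\<iota> c" c] by simp

lemma kelly_left: "lm (b \<odot> c) \<cdot> \<alpha> \<I> b c = lm b \<otimes> \<iota> c"
proof -
  let ?K = "lm (b \<odot> c) \<cdot> \<alpha> \<I> b c"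
  let ?Q = "\<alpha> \<I> (\<I> \<odot> b) c \<cdot> (\<alpha> \<I> \<I> b \<otimes> \<iota> c)"
  have P: "\<alpha> \<I> \<I> (b \<odot> c) \<cdot> \<alpha> (\<I> \<odot> \<I>) b c = (\<iota> \<I> \<otimes> \<alpha> \<I> b c) \<cdot> ?Q"
    using pentagon by simp
  have T1: "(\<iota> \<I> \<otimes> lm (b \<odot> c)) \<cdot> (\<alpha> \<I> \<I> (b \<odot> c) \<cdot> \<alpha> (\<I> \<odot> \<I>) b c) = (\<iota> \<I> \<otimes> (lm b \<otimes> \<iota> c)) \<cdot> ?Q"
    by (simp only: triangle[THEN restc] anatR_id anatRr ichr2 ich triangle il S)
  have T2: "(\<iota> \<I> \<otimes> lm (b \<odot> c)) \<cdot> ((\<iota> \<I> \<otimes> \<alpha> \<I> b c) \<cdot> ?Q) = (\<iota> \<I> \<otimes> ?K) \<cdot> ?Q"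
    by (simp only: ichr2 il S)
  have "(\<iota> \<I> \<otimes> (lm b \<otimes> \<iota> c)) \<cdot> ?Q = (\<iota> \<I> \<otimes> ?K) \<cdot> ?Q" using T1 T2 P by metis
  then have "((\<iota> \<I> \<otimes> (lm b \<otimes> \<iota> c)) \<cdot> ?Q) \<cdot> ((\<alpha>' \<I> \<I> b \<otimes> \<iota> c) \<cdot> \<alpha>' \<I> (\<I> \<odot> b) c)
     = ((\<iota> \<I> \<otimes> ?K) \<cdot> ?Q) \<cdot> ((\<alpha>' \<I> \<I> b \<otimes> \<iota> c) \<cdot> \<alpha>' \<I> (\<I> \<odot> b) c)" by (rule arg_cong)
  then have E: "\<iota> \<I> \<otimes> (lm b \<otimes> \<iota> c) = \<iota> \<I> \<otimes> ?K"
    by (simp add: ichr2)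
  have "?K = lm (b \<odot> c) \<cdot> ((\<iota> \<I> \<otimes> ?K) \<cdot> lm' ((\<I> \<odot> b) \<odot> c))"
    by (rule lm_cancel) simp_all
  also have "\<dots> = lm (b \<odot> c) \<cdot> ((\<iota> \<I> \<otimes> (lm b \<otimes> \<iota> c)) \<cdot> lm' ((\<I> \<odot> b) \<odot> c))" using E by simp
  also have "\<dots> = lm b \<otimes> \<iota> c" by (rule lm_cancel[symmetric]) simp_all
  finally show ?thesis .
qed

lemma kelly_left': "(lm b \<otimes> \<iota> c) \<cdot> \<alpha>' \<I> b c = lm (b \<odot> c)"
  by (simp add: kelly_left[symmetric])

lemma anat'R_id: "mdom C h = c \<Longrightarrow> (\<iota> (a \<odot> b) \<otimes> h) \<cdot> \<alpha>' a b c = \<alpha>' a b (mcod C h) \<cdot> (\<iota> a \<otimes> (\<iota> b \<otimes> h))"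
  using anat'R[of "\<iota> a" a "\<iota> b" b h c] by simp
lemma anat'R_idr: "mdom C h = c \<Longrightarrow> mcod C r = a \<odot> (b \<odot> c) \<Longrightarrow> (\<iota> (a \<odot> b) \<otimes> h) \<cdot> (\<alpha>' a b c \<cdot> r) = \<alpha>' a b (mcod C h) \<cdot> ((\<iota> a \<otimes> (\<iota> b \<otimes> h)) \<cdot> r)"
  by (subst restc[OF anat'R_id]) simp_all

lemma P2: "(\<iota> (a \<odot> b) \<otimes> (lm b \<cdot> (\<epsilon> a \<otimes> \<iota> b))) \<cdot> \<Delta> (a \<odot> b) = \<alpha>' a b b \<cdot> (\<iota> a \<otimes> \<Delta> b)"
proof -
  have "(\<iota> (a \<odot> b) \<otimes> (lm b \<cdot> (\<epsilon> a \<otimes> \<iota> b))) \<cdot> \<Delta> (a \<odot> b)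
    = (\<iota> (a \<odot> b) \<otimes> lm b) \<cdot> ((\<iota> (a \<odot> b) \<otimes> (\<epsilon> a \<otimes> \<iota> b)) \<cdot> (\<alpha>' a b (a \<odot> b) \<cdot> ((\<iota> a \<otimes> (\<alpha> b a b \<cdot> ((\<sigma> a b \<otimes> \<iota> b) \<cdot> \<alpha>' a b b))) \<cdot> (\<alpha> a a (b \<odot> b) \<cdot> (\<Delta> a \<otimes> \<Delta> b)))))"
    by (simp only: copy_tens middle4_def ichr2 ich il S)
  also have "\<dots> = (\<iota> (a \<odot> b) \<otimes> lm b) \<cdot> (\<alpha>' a b (\<I> \<odot> b) \<cdot> ((\<iota> a \<otimes> (\<alpha> b \<I> b \<cdot> (((\<iota> b \<otimes> \<epsilon> a) \<otimes> \<iota> b) \<cdot> ((\<sigma> a b \<otimes> \<iota> b) \<cdot> \<alpha>' a b b)))) \<cdot> (\<alpha> a a (b \<odot> b) \<cdot> (\<Delta> a \<otimes> \<Delta> b))))"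
    by (simp only: anat'R_idr ichr2 il anatRr S)
  also have "\<dots> = (\<iota> (a \<odot> b) \<otimes> lm b) \<cdot> (\<alpha>' a b (\<I> \<odot> b) \<cdot> ((\<iota> a \<otimes> (\<alpha> b \<I> b \<cdot> ((\<sigma> \<I> b \<otimes> \<iota> b) \<cdot> (((\<epsilon> a \<otimes> \<iota> b) \<otimes> \<iota> b) \<cdot> \<alpha>' a b b)))) \<cdot> (\<alpha> a a (b \<odot> b) \<cdot> (\<Delta> a \<otimes> \<Delta> b))))"
    by (simp only: ichr2 ich il snatR S)
  also have "\<dots> = (\<iota> (a \<odot> b) \<otimes> lm b) \<cdot> (\<alpha>' a b (\<I> \<odot> b) \<cdot> ((\<iota> a \<otimes> (\<alpha> b \<I> b \<cdot> ((\<sigma> \<I> b \<otimes> \<iota> b) \<cdot> \<alpha>' \<I> b b))) \<cdot> ((\<iota> a \<otimes> (\<epsilon> a \<otimes> (\<iota> b \<otimes> \<iota> b))) \<cdot> (\<alpha> a a (b \<odot> b) \<cdot> (\<Delta> a \<otimes> \<Delta> b)))))"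
    by (simp only: anat'R ichr2 ich il S)
  also have "\<dots> = (\<iota> (a \<odot> b) \<otimes> lm b) \<cdot> (\<alpha>' a b (\<I> \<odot> b) \<cdot> ((\<iota> a \<otimes> (\<alpha> b \<I> b \<cdot> ((\<sigma> \<I> b \<otimes> \<iota> b) \<cdot> \<alpha>' \<I> b b))) \<cdot> (\<alpha> a \<I> (b \<odot> b) \<cdot> (\<rho>' a \<otimes> \<Delta> b))))"
    by (simp only: anatRr ich copy_del tid il S)
  also have "\<dots> = \<alpha>' a b b \<cdot> ((\<iota> a \<otimes> lm (b \<odot> b)) \<cdot> (\<alpha> a \<I> (b \<odot> b) \<cdot> (\<rho>' a \<otimes> \<Delta> b)))"
    by (simp only: anat'R_idr ichr2 triangle[THEN restc] ich rho_swap il kelly_left' S)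
  also have "\<dots> = \<alpha>' a b b \<cdot> (\<iota> a \<otimes> \<Delta> b)"
    by (simp only: triangle[THEN restc] ich rinv2 il S)
  finally show ?thesis .
qed

lemma kelly_right': "\<rho> (a \<odot> b) \<cdot> \<alpha>' a b \<I> = \<iota> a \<otimes> \<rho> b"
  by (simp add: kelly_right[symmetric])

lemma P1: "(\<iota> (a \<odot> b) \<otimes> (\<rho> a \<cdot> (\<iota> a \<otimes> \<epsilon> b))) \<cdot> \<Delta> (a \<odot> b) = \<alpha>' a b a \<cdot> ((\<iota> a \<otimes> \<sigma> a b) \<cdot> (\<alpha> a a b \<cdot> (\<Delta> a \<otimes> \<iota> b)))"
proof -
  have "(\<iota> (a \<odot> b) \<otimes> (\<rho> a \<cdot> (\<iota> a \<otimes> \<epsilon> b))) \<cdot> \<Delta> (a \<odot> b)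
    = (\<iota> (a \<odot> b) \<otimes> \<rho> a) \<cdot> ((\<iota> (a \<odot> b) \<otimes> (\<iota> a \<otimes> \<epsilon> b)) \<cdot> (\<alpha>' a b (a \<odot> b) \<cdot> ((\<iota> a \<otimes> (\<alpha> b a b \<cdot> ((\<sigma> a b \<otimes> \<iota> b) \<cdot> \<alpha>' a b b))) \<cdot> (\<alpha> a a (b \<odot> b) \<cdot> (\<Delta> a \<otimes> \<Delta> b)))))"
    by (simp only: copy_tens middle4_def ichr2 ich il S)
  also have "\<dots> = (\<iota> (a \<odot> b) \<otimes> \<rho> a) \<cdot> (\<alpha>' a b (a \<odot> \<I>) \<cdot> ((\<iota> a \<otimes> (\<alpha> b a \<I> \<cdot> (((\<iota> b \<otimes> \<iota> a) \<otimes> \<epsilon> b) \<cdot> ((\<sigma> a b \<otimes> \<iota> b) \<cdot> \<alpha>' a b b)))) \<cdot> (\<alpha> a a (b \<odot> b) \<cdot> (\<Delta> a \<otimes> \<Delta> b))))"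
    by (simp only: anat'R_idr ichr2 il anatRr S)
  also have "\<dots> = (\<iota> (a \<odot> b) \<otimes> \<rho> a) \<cdot> (\<alpha>' a b (a \<odot> \<I>) \<cdot> ((\<iota> a \<otimes> (\<alpha> b a \<I> \<cdot> ((\<sigma> a b \<otimes> \<iota> \<I>) \<cdot> (((\<iota> a \<otimes> \<iota> b) \<otimes> \<epsilon> b) \<cdot> \<alpha>' a b b)))) \<cdot> (\<alpha> a a (b \<odot> b) \<cdot> (\<Delta> a \<otimes> \<Delta> b))))"
    by (simp only: ichr2 ich il ir tid S)
  also have "\<dots> = (\<iota> (a \<odot> b) \<otimes> \<rho> a) \<cdot> (\<alpha>' a b (a \<odot> \<I>) \<cdot> ((\<iota> a \<otimes> (\<alpha> b a \<I> \<cdot> ((\<sigma> a b \<otimes> \<iota> \<I>) \<cdot> \<alpha>' a b \<I>))) \<cdot> ((\<iota> a \<otimes> (\<iota> a \<otimes> (\<iota> b \<otimes> \<epsilon> b))) \<cdot> (\<alpha> a a (b \<odot> b) \<cdot> (\<Delta> a \<otimes> \<Delta> b)))))"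
    by (simp only: anat'R ichr2 ich il S)
  also have "\<dots> = (\<iota> (a \<odot> b) \<otimes> \<rho> a) \<cdot> (\<alpha>' a b (a \<odot> \<I>) \<cdot> ((\<iota> a \<otimes> (\<alpha> b a \<I> \<cdot> ((\<sigma> a b \<otimes> \<iota> \<I>) \<cdot> \<alpha>' a b \<I>))) \<cdot> (\<alpha> a a (b \<odot> \<I>) \<cdot> (\<Delta> a \<otimes> \<rho>' b))))"
    by (simp only: anatRr ich copy_del tid il S)
  also have "\<dots> = \<alpha>' a b a \<cdot> ((\<iota> a \<otimes> \<sigma> a b) \<cdot> ((\<iota> a \<otimes> (\<iota> a \<otimes> \<rho> b)) \<cdot> (\<alpha> a a (b \<odot> \<I>) \<cdot> (\<Delta> a \<otimes> \<rho>' b))))"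
    by (simp only: anat'R_idr ichr2 kelly_right[THEN restc] rnatLr kelly_right' il S)
  also have "\<dots> = \<alpha>' a b a \<cdot> ((\<iota> a \<otimes> \<sigma> a b) \<cdot> (\<alpha> a a b \<cdot> (\<Delta> a \<otimes> \<iota> b)))"
    by (simp only: anatRr ichr2 ich tid il rinv2 S)
  finally show ?thesis .
qed

lemma coassoc_r: "mcod C r = a \<Longrightarrow> \<alpha> a a a \<cdot> ((\<Delta> a \<otimes> \<iota> a) \<cdot> (\<Delta> a \<cdot> r)) = (\<iota> a \<otimes> \<Delta> a) \<cdot> (\<Delta> a \<cdot> r)"
proof -
  assume r: "mcod C r = a"
  have "(\<alpha> a a a \<cdot> ((\<Delta> a \<otimes> \<iota> a) \<cdot> \<Delta> a)) \<cdot> r = ((\<iota> a \<otimes> \<Delta> a) \<cdot> \<Delta> a) \<cdot> r"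
    by (simp only: coassoc)
  then show ?thesis by (simp only: S r)
qed

lemma eps_lemma: "mcod C h = z \<Longrightarrow> mdom C h = a \<Longrightarrow> mcod C r = a \<Longrightarrow>
   lm z \<cdot> ((\<epsilon> a \<otimes> h) \<cdot> (\<Delta> a \<cdot> r)) = h \<cdot> r"
proof -
  assume A: "mcod C h = z" "mdom C h = a" "mcod C r = a"
  have "lm z \<cdot> ((\<epsilon> a \<otimes> h) \<cdot> (\<Delta> a \<cdot> r)) = lm z \<cdot> ((\<iota> \<I> \<otimes> h) \<cdot> ((\<epsilon> a \<otimes> \<iota> a) \<cdot> (\<Delta> a \<cdot> r)))"
    by (simp only: ichr2 il ir S A)
  also have "\<dots> = h \<cdot> (lm a \<cdot> ((\<epsilon> a \<otimes> \<iota> a) \<cdot> (\<Delta> a \<cdot> r)))"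
    by (simp only: lnatLr S A)
  also have "\<dots> = h \<cdot> r"
    by (simp only: del_copy[THEN restc] linv2r S A)
  finally show ?thesis .
qed

lemma main:
  assumes cau: "causal C"
    and D: "mdom C p = T" "mcod C p = X" "mdom C f = X" "mcod C f = Y" "mdom C g = Y" "mcod C g = Z"
    and H: "(\<iota> X \<otimes> (\<Delta> Z \<cdot> (g \<cdot> f))) \<cdot> (\<Delta> X \<cdot> p) = (\<iota> X \<otimes> (((g \<cdot> f) \<otimes> (g \<cdot> f)) \<cdot> \<Delta> X)) \<cdot> (\<Delta> X \<cdot> p)"
  shows "(\<iota> X \<otimes> ((\<iota> Y \<otimes> g) \<cdot> (\<Delta> Y \<cdot> f))) \<cdot> (\<Delta> X \<cdot> p) = (\<iota> X \<otimes> ((f \<otimes> (g \<cdot> f)) \<cdot> \<Delta> X)) \<cdot> (\<Delta> X \<cdot> p)"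
proof -
  let ?cf = "(\<iota> X \<otimes> f) \<cdot> (\<Delta> X \<cdot> p)"
  let ?cg = "\<iota> X \<otimes> g"
  let ?h1 = "lm Z \<cdot> (\<epsilon> X \<otimes> \<iota> Z)"
  let ?h2 = "(g \<cdot> f) \<cdot> (\<rho> X \<cdot> (\<iota> X \<otimes> \<epsilon> Z))"
  have C1: "(\<iota> (X \<odot> Z) \<otimes> ?h1) \<cdot> (\<Delta> (X \<odot> Z) \<cdot> (?cg \<cdot> ?cf)) = \<alpha>' X Z Z \<cdot> ((\<iota> X \<otimes> (((g \<cdot> f) \<otimes> (g \<cdot> f)) \<cdot> \<Delta> X)) \<cdot> (\<Delta> X \<cdot> p))"
  proof -
    have "(\<iota> (X \<odot> Z) \<otimes> ?h1) \<cdot> (\<Delta> (X \<odot> Z) \<cdot> (?cg \<cdot> ?cf)) = \<alpha>' X Z Z \<cdot> ((\<iota> X \<otimes> \<Delta> Z) \<cdot> (?cg \<cdot> ?cf))"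
      by (simp only: P2[THEN restc] S D)
    also have "\<dots> = \<alpha>' X Z Z \<cdot> ((\<iota> X \<otimes> (\<Delta> Z \<cdot> (g \<cdot> f))) \<cdot> (\<Delta> X \<cdot> p))"
      by (simp only: ichr2 il S D)
    also have "\<dots> = \<alpha>' X Z Z \<cdot> ((\<iota> X \<otimes> (((g \<cdot> f) \<otimes> (g \<cdot> f)) \<cdot> \<Delta> X)) \<cdot> (\<Delta> X \<cdot> p))"
      by (simp only: H)
    finally show ?thesis .
  qed
  have C2: "(\<iota> (X \<odot> Z) \<otimes> ?h2) \<cdot> (\<Delta> (X \<odot> Z) \<cdot> (?cg \<cdot> ?cf)) = \<alpha>' X Z Z \<cdot> ((\<iota> X \<otimes> (((g \<cdot> f) \<otimes> (g \<cdot> f)) \<cdot> \<Delta> X)) \<cdot> (\<Delta> X \<cdot> p))"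
  proof -
    have "(\<iota> (X \<odot> Z) \<otimes> ?h2) \<cdot> (\<Delta> (X \<odot> Z) \<cdot> (?cg \<cdot> ?cf))
       = (\<iota> (X \<odot> Z) \<otimes> (g \<cdot> f)) \<cdot> ((\<iota> (X \<odot> Z) \<otimes> (\<rho> X \<cdot> (\<iota> X \<otimes> \<epsilon> Z))) \<cdot> (\<Delta> (X \<odot> Z) \<cdot> (?cg \<cdot> ?cf)))"
      by (simp only: ichr2 il S D)
    also have "\<dots> = (\<iota> (X \<odot> Z) \<otimes> (g \<cdot> f)) \<cdot> (\<alpha>' X Z X \<cdot> ((\<iota> X \<otimes> \<sigma> X Z) \<cdot> (\<alpha> X X Z \<cdot> ((\<Delta> X \<otimes> \<iota> Z) \<cdot> (?cg \<cdot> ?cf)))))"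
      by (simp only: P1[THEN restc] S D)
    also have "\<dots> = (\<iota> (X \<odot> Z) \<otimes> (g \<cdot> f)) \<cdot> (\<alpha>' X Z X \<cdot> ((\<iota> X \<otimes> \<sigma> X Z) \<cdot> (\<alpha> X X Z \<cdot> (((\<iota> X \<otimes> \<iota> X) \<otimes> (g \<cdot> f)) \<cdot> ((\<Delta> X \<otimes> \<iota> X) \<cdot> (\<Delta> X \<cdot> p))))))"
      by (simp only: ichr2 ich il ir tid S D)
    also have "\<dots> = (\<iota> (X \<odot> Z) \<otimes> (g \<cdot> f)) \<cdot> (\<alpha>' X Z X \<cdot> ((\<iota> X \<otimes> \<sigma> X Z) \<cdot> ((\<iota> X \<otimes> (\<iota> X \<otimes> (g \<cdot> f))) \<cdot> ((\<iota> X \<otimes> \<Delta> X) \<cdot> (\<Delta> X \<cdot> p)))))"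
      by (simp only: anatLr coassoc_r S D)
    also have "\<dots> = \<alpha>' X Z Z \<cdot> ((\<iota> X \<otimes> (\<iota> Z \<otimes> (g \<cdot> f))) \<cdot> ((\<iota> X \<otimes> \<sigma> X Z) \<cdot> ((\<iota> X \<otimes> (\<iota> X \<otimes> (g \<cdot> f))) \<cdot> ((\<iota> X \<otimes> \<Delta> X) \<cdot> (\<Delta> X \<cdot> p)))))"
      by (simp only: anat'R_idr S D)
    also have "\<dots> = \<alpha>' X Z Z \<cdot> ((\<iota> X \<otimes> (((g \<cdot> f) \<otimes> (g \<cdot> f)) \<cdot> \<Delta> X)) \<cdot> (\<Delta> X \<cdot> p))"
      by (simp only: ichr2 ich il ir snatLr snatL cocomm S D)
    finally show ?thesis .
  qed
  have hf: "hom C ?cf T (X \<odot> Y)" and hg: "hom C ?cg (X \<odot> Y) (X \<odot> Z)"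
    and hh1: "hom C ?h1 (X \<odot> Z) Z" and hh2: "hom C ?h2 (X \<odot> Z) Z"
    by (simp_all add: hom_def D)
  have DD: "(\<iota> (X \<odot> Y) \<otimes> ((\<iota> (X \<odot> Z) \<otimes> ?h1) \<cdot> (\<Delta> (X \<odot> Z) \<cdot> ?cg))) \<cdot> (\<Delta> (X \<odot> Y) \<cdot> ?cf)
          = (\<iota> (X \<odot> Y) \<otimes> ((\<iota> (X \<odot> Z) \<otimes> ?h2) \<cdot> (\<Delta> (X \<odot> Z) \<cdot> ?cg))) \<cdot> (\<Delta> (X \<odot> Y) \<cdot> ?cf)"
    using cau[unfolded causal_def, rule_format, OF hf hg hh1 hh2] C1 C2 by simp
  let ?k = "\<lambda>t. \<alpha> X Y Z \<cdot> ((\<iota> (X \<odot> Y) \<otimes> (lm Z \<cdot> (\<epsilon> (X \<odot> Z) \<otimes> \<iota> Z))) \<cdot> t)"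
  have K1: "?k ((\<iota> (X \<odot> Y) \<otimes> ((\<iota> (X \<odot> Z) \<otimes> ?h1) \<cdot> (\<Delta> (X \<odot> Z) \<cdot> ?cg))) \<cdot> (\<Delta> (X \<odot> Y) \<cdot> ?cf))
      = (\<iota> X \<otimes> ((\<iota> Y \<otimes> g) \<cdot> (\<Delta> Y \<cdot> f))) \<cdot> (\<Delta> X \<cdot> p)"
  proof -
    have "?k ((\<iota> (X \<odot> Y) \<otimes> ((\<iota> (X \<odot> Z) \<otimes> ?h1) \<cdot> (\<Delta> (X \<odot> Z) \<cdot> ?cg))) \<cdot> (\<Delta> (X \<odot> Y) \<cdot> ?cf))
       = \<alpha> X Y Z \<cdot> ((\<iota> (X \<odot> Y) \<otimes> (?h1 \<cdot> ?cg)) \<cdot> (\<Delta> (X \<odot> Y) \<cdot> ?cf))"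
      by (simp only: ichr2 ich il ir eps_lemma S D)
    also have "\<dots> = \<alpha> X Y Z \<cdot> ((\<iota> (X \<odot> Y) \<otimes> (g \<cdot> (lm Y \<cdot> (\<epsilon> X \<otimes> \<iota> Y)))) \<cdot> (\<Delta> (X \<odot> Y) \<cdot> ?cf))"
      by (simp only: lnatRr ich il ir S D)
    also have "\<dots> = \<alpha> X Y Z \<cdot> ((\<iota> (X \<odot> Y) \<otimes> g) \<cdot> ((\<iota> (X \<odot> Y) \<otimes> (lm Y \<cdot> (\<epsilon> X \<otimes> \<iota> Y))) \<cdot> (\<Delta> (X \<odot> Y) \<cdot> ?cf)))"
      by (simp only: ichr2 il S D)
    also have "\<dots> = \<alpha> X Y Z \<cdot> ((\<iota> (X \<odot> Y) \<otimes> g) \<cdot> (\<alpha>' X Y Y \<cdot> ((\<iota> X \<otimes> \<Delta> Y) \<cdot> ?cf)))"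
      by (simp only: P2[THEN restc] S D)
    also have "\<dots> = (\<iota> X \<otimes> (\<iota> Y \<otimes> g)) \<cdot> ((\<iota> X \<otimes> \<Delta> Y) \<cdot> ?cf)"
      by (simp only: anat'R_idr ainv2r S D)
    also have "\<dots> = (\<iota> X \<otimes> ((\<iota> Y \<otimes> g) \<cdot> (\<Delta> Y \<cdot> f))) \<cdot> (\<Delta> X \<cdot> p)"
      by (simp only: ichr2 il S D)
    finally show ?thesis .
  qed
  have K2: "?k ((\<iota> (X \<odot> Y) \<otimes> ((\<iota> (X \<odot> Z) \<otimes> ?h2) \<cdot> (\<Delta> (X \<odot> Z) \<cdot> ?cg))) \<cdot> (\<Delta> (X \<odot> Y) \<cdot> ?cf))
      = (\<iota> X \<otimes> ((f \<otimes> (g \<cdot> f)) \<cdot> \<Delta> X)) \<cdot> (\<Delta> X \<cdot> p)"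
  proof -
    have "?k ((\<iota> (X \<odot> Y) \<otimes> ((\<iota> (X \<odot> Z) \<otimes> ?h2) \<cdot> (\<Delta> (X \<odot> Z) \<cdot> ?cg))) \<cdot> (\<Delta> (X \<odot> Y) \<cdot> ?cf))
       = \<alpha> X Y Z \<cdot> ((\<iota> (X \<odot> Y) \<otimes> (?h2 \<cdot> ?cg)) \<cdot> (\<Delta> (X \<odot> Y) \<cdot> ?cf))"
      by (simp only: ichr2 ich il ir eps_lemma S D)
    also have "\<dots> = \<alpha> X Y Z \<cdot> ((\<iota> (X \<odot> Y) \<otimes> ((g \<cdot> f) \<cdot> (\<rho> X \<cdot> (\<iota> X \<otimes> \<epsilon> Y)))) \<cdot> (\<Delta> (X \<odot> Y) \<cdot> ?cf))"
      by (simp only: ich il delc S D)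
    also have "\<dots> = \<alpha> X Y Z \<cdot> ((\<iota> (X \<odot> Y) \<otimes> (g \<cdot> f)) \<cdot> ((\<iota> (X \<odot> Y) \<otimes> (\<rho> X \<cdot> (\<iota> X \<otimes> \<epsilon> Y))) \<cdot> (\<Delta> (X \<odot> Y) \<cdot> ?cf)))"
      by (simp only: ichr2 il S D)
    also have "\<dots> = \<alpha> X Y Z \<cdot> ((\<iota> (X \<odot> Y) \<otimes> (g \<cdot> f)) \<cdot> (\<alpha>' X Y X \<cdot> ((\<iota> X \<otimes> \<sigma> X Y) \<cdot> (\<alpha> X X Y \<cdot> ((\<Delta> X \<otimes> \<iota> Y) \<cdot> ?cf)))))"
      by (simp only: P1[THEN restc] S D)
    also have "\<dots> = \<alpha> X Y Z \<cdot> ((\<iota> (X \<odot> Y) \<otimes> (g \<cdot> f)) \<cdot> (\<alpha>' X Y X \<cdot> ((\<iota> X \<otimes> \<sigma> X Y) \<cdot> (\<alpha> X X Y \<cdot> (((\<iota> X \<otimes> \<iota> X) \<otimes> f) \<cdot> ((\<Delta> X \<otimes> \<iota> X) \<cdot> (\<Delta> X \<cdot> p)))))))"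
      by (simp only: ichr2 ich il ir tid S D)
    also have "\<dots> = \<alpha> X Y Z \<cdot> ((\<iota> (X \<odot> Y) \<otimes> (g \<cdot> f)) \<cdot> (\<alpha>' X Y X \<cdot> ((\<iota> X \<otimes> \<sigma> X Y) \<cdot> ((\<iota> X \<otimes> (\<iota> X \<otimes> f)) \<cdot> ((\<iota> X \<otimes> \<Delta> X) \<cdot> (\<Delta> X \<cdot> p))))))"
      by (simp only: anatLr coassoc_r S D)
    also have "\<dots> = (\<iota> X \<otimes> (\<iota> Y \<otimes> (g \<cdot> f))) \<cdot> ((\<iota> X \<otimes> \<sigma> X Y) \<cdot> ((\<iota> X \<otimes> (\<iota> X \<otimes> f)) \<cdot> ((\<iota> X \<otimes> \<Delta> X) \<cdot> (\<Delta> X \<cdot> p))))"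
      by (simp only: anat'R_idr ainv2r S D)
    also have "\<dots> = (\<iota> X \<otimes> ((f \<otimes> (g \<cdot> f)) \<cdot> \<Delta> X)) \<cdot> (\<Delta> X \<cdot> p)"
      by (simp only: ichr2 ich il ir snatLr snatL cocomm S D)
    finally show ?thesis .
  qed
  show ?thesis using K1 K2 DD by metis
qed

end

theorem corollary2p28:
  fixes C :: "('o, 'm) mcat"
  assumes "markov_category C" and "causal C"
  shows "relatively_positive C"
proof -
  interpret markov_category C by fact
  show ?thesis unfolding relatively_positive_def
  proof (intro allI impI)
    fix p f g T X Y Z
    assume hp: "hom C p T X" and hf: "hom C f X Y" and hg: "hom C g Y Z"
      and H: "as_eq C p (comp C (copy C Z) (comp C g f)) (comp C (mtens C (comp C g f) (comp C g f)) (copy C X))"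
    have D: "mdom C p = T" "mcod C p = X" "mdom C f = X" "mcod C f = Y" "mdom C g = Y" "mcod C g = Z"
      using hp hf hg by (auto simp: hom_def)
    have H': "comp C (mtens C (mid C X) (comp C (copy C Z) (comp C g f))) (comp C (copy C X) p)
      = comp C (mtens C (mid C X) (comp C (mtens C (comp C g f) (comp C g f)) (copy C X))) (comp C (copy C X) p)"
      using H unfolding as_eq_def D(2) .
    show "as_eq C p (comp C (mtens C (mid C Y) g) (comp C (copy C Y) f)) (comp C (mtens C f (comp C g f)) (copy C X))"
      unfolding as_eq_def D(2) by (rule main[OF assms(2) D H'])
  qed
qed

end
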